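(* Let $n,T\in\mathbb{N}$ and let real numbers $r_{it}$, $i\in\{1,\ldots,n\}$, $t\in\{1,\ldots,T\}$, be given. Consider the random return vector $\boldsymbol{r}=(r_1,\ldots,r_n)^{\mathsf T}$ which takes the value $(r_{1t},\ldots,r_{nt})^{\mathsf T}$ in scenario $t$, each scenario $t\in\{1,\ldots,T\}$ having probability $1/T$, and let $\mu_i=\frac1T\sum_{t=1}^T r_{it}$, $\boldsymbol{\mu}=(\mu_1,\ldots,\mu_n)^{\mathsf T}$. Define the convex function $\mathrm{MAD}:\mathbb{R}^n\to\mathbb{R}$ by $$\mathrm{MAD}(\boldsymbol{x})=\mathbb{E}\big[|(\boldsymbol{r}-\boldsymbol{\mu})^{\mathsf T}\boldsymbol{x}|\big]=\frac1T\sum_{t=1}^T\Big|\sum_{i=1}^n (r_{it}-\mu_i)x_i\Big|,$$ and let $\partial\mathrm{MAD}(\boldsymbol{x})$ denote its (convex-analysis) subdifferential at $\boldsymbol{x}$. Let $\Delta^{n-1}=\{\boldsymbol{x}\in\mathbb{R}^n: x_i\ge0\ \forall i,\ \sum_i x_i=1\}$. Call $\boldsymbol{x}\in\Delta^{n-1}$ a MAD-RP portfolio if there exist $\boldsymbol{s}\in\partial\mathrm{MAD}(\boldsymbol{x})$ and $\lambda\in\mathbb{R}$ such that $x_i s_i=\lambda$ for all $i\in\{1,\ldots,n\}$ (i.e. there is a vector in $\{\boldsymbol{x}\cdot\boldsymbol{s}:\boldsymbol{s}\in\partial\mathrm{MAD}(\boldsymbol{x})\}$, $\cdot$ the componentwise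 product, all of whose components are equal). Suppose that the only vector $\boldsymbol{x}\in\mathbb{R}^n_+$ such that $(\boldsymbol{r}-\boldsymbol{\mu})^{\mathsf T}\boldsymbol{x}=0$ holds almost surely (i.e. $\sum_{i}(r_{it}-\mu_i)x_i=0$ for every $t$) is $\boldsymbol{x}=0$. Then there exists a unique MAD-RP portfolio.
   Context: $\mathbb{R}^n_+$ denotes the set of vectors in $\mathbb{R}^n$ with all components nonnegative. *)

theory Defs
  imports "HOL-Analysis.Analysis"
begin

text \<open>Scenario returns: r $ t $ i is the return of asset i in scenario t.
  Assets are indexed by the finite type 'n (n = CARD('n)), scenarios by the
  finite type 't (T = CARD('t)), each scenario having probability 1/T.\<close>

definition mean_ret :: "real^'n^'t::finite \<Rightarrow> real^'n" where
  "mean_ret r = (\<chi> i. (\<Sum>t\<in>UNIV. r $ t $ i) / real CARD('t))"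

definition MAD :: "real^'n^'t::finite \<Rightarrow> real^'n::finite \<Rightarrow> real" where
  "MAD r x = (\<Sum>t\<in>UNIV. \<bar>\<Sum>i\<in>UNIV. (r $ t $ i - mean_ret r $ i) * x $ i\<bar>) / real CARD('t)"

definition subdifferential :: "(real^'n::finite \<Rightarrow> real) \<Rightarrow> real^'n \<Rightarrow> (real^'n) set" where
  "subdifferential f x = {s. \<forall>y. f y \<ge> f x + s \<bullet> (y - x)}"

definition std_simplex :: "(real^'n::finite) set" where
  "std_simplex = {x. (\<forall>i. x $ i \<ge> 0) \<and> (\<Sum>i\<in>UNIV. x $ i) = 1}"

definition MAD_RP :: "real^'n^'t::finite \<Rightarrow> real^'n::finite \<Rightarrow> bool" where
  "MAD_RP r x \<longleftrightarrow> x \<in> std_simplex \<and>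
     (\<exists>s \<in> subdifferential (MAD r) x. \<exists>c::real. \<forall>i. x $ i * s $ i = c)"

end

theory Submission
  imports Defs
begin

definition Arow :: "real^'n^'t::finite \<Rightarrow> 't \<Rightarrow> real^'n::finite" where
  "Arow r t = (\<chi> i. r $ t $ i - mean_ret r $ i)"

lemma MAD_alt: "MAD r x = (\<Sum>t\<in>UNIV. \<bar>Arow r t \<bullet> x\<bar>) / real CARD('t::finite)"
  for r :: "real^'n::finite^'t"
  by (simp add: MAD_def Arow_def inner_vec_def)

lemma MAD_nonneg: "MAD r x \<ge> 0"
  by (simp add: MAD_alt sum_nonneg)

lemma MAD_zero: "MAD r 0 = 0"
  by (simp add: MAD_alt)

lemma MAD_scale: "c \<ge> 0 \<Longrightarrow> MAD r (c *\<^sub>R x) = c * MAD r x"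
  by (simp add: MAD_alt abs_mult sum_distrib_left)

lemma MAD_add: "MAD r (x + y) \<le> MAD r x + MAD r y"
proof -
  have "(\<Sum>t\<in>UNIV. \<bar>Arow r t \<bullet> (x + y)\<bar>) \<le> (\<Sum>t\<in>UNIV. \<bar>Arow r t \<bullet> x\<bar> + \<bar>Arow r t \<bullet> y\<bar>)"
    by (intro sum_mono) (simp add: inner_add_right abs_triangle_ineq)
  then show ?thesis unfolding MAD_alt sum.distrib add_divide_distrib[symmetric] by (simp add: divide_right_mono)
qed

lemma MAD_convex:
  assumes "0 \<le> t" "t \<le> 1"
  shows "MAD r (y + t *\<^sub>R d) \<le> (1 - t) * MAD r y + t * MAD r (y + d)"
proof -
  have "y + t *\<^sub>R d = (1 - t) *\<^sub>R y + t *\<^sub>R (y + d)" by (simp add: algebra_simps)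
  then have "MAD r (y + t *\<^sub>R d) \<le> MAD r ((1 - t) *\<^sub>R y) + MAD r (t *\<^sub>R (y + d))"
    using MAD_add by metis
  with assms show ?thesis by (simp add: MAD_scale)
qed

lemma MAD_cont: "continuous_on S (MAD r)"
  unfolding MAD_alt[abs_def] by (intro continuous_intros) auto

lemma subdiff_char:
  "s \<in> subdifferential (MAD r) x \<longleftrightarrow> s \<bullet> x = MAD r x \<and> (\<forall>z. s \<bullet> z \<le> MAD r z)"
proof
  assume s: "s \<in> subdifferential (MAD r) x"
  then have h: "\<And>y. MAD r y \<ge> MAD r x + s \<bullet> (y - x)" by (simp add: subdifferential_def)
  have "MAD r 0 \<ge> MAD r x + s \<bullet> (0 - x)" by (rule h)
  moreover have "MAD r ((2::real) *\<^sub>R x) \<ge> MAD r x + s \<bullet> ((2::real) *\<^sub>R x - x)" by (rule h)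
  ultimately have e: "s \<bullet> x = MAD r x"
    by (simp add: MAD_zero MAD_scale inner_diff_right algebra_simps)
  have "s \<bullet> z \<le> MAD r z" for z
  proof -
    have "MAD r (x + z) \<ge> MAD r x + s \<bullet> (x + z - x)" by (rule h)
    with MAD_add[of r x z] show ?thesis by simp
  qed
  with e show "s \<bullet> x = MAD r x \<and> (\<forall>z. s \<bullet> z \<le> MAD r z)" by blast
next
  assume "s \<bullet> x = MAD r x \<and> (\<forall>z. s \<bullet> z \<le> MAD r z)"
  then show "s \<in> subdifferential (MAD r) x"
    by (auto simp: subdifferential_def inner_diff_right)
qed

lemma MAD_pos:
  fixes r :: "real^'n::finite^'t::finite"
  assumes H: "\<forall>x::real^'n. (\<forall>i. x $ i \<ge> 0) \<and>
             (\<forall>t. (\<Sum>i\<in>UNIV. (r $ t $ i - mean_ret r $ i) * x $ i) = 0) \<longrightarrow> x = 0"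
    and x: "\<forall>i. x $ i \<ge> 0" "x \<noteq> 0"
  shows "MAD r x > 0"
proof (rule ccontr)
  assume "\<not> MAD r x > 0"
  then have "MAD r x = 0" using MAD_nonneg[of r x] by linarith
  then have "(\<Sum>t\<in>UNIV. \<bar>\<Sum>i\<in>UNIV. (r $ t $ i - mean_ret r $ i) * x $ i\<bar>) = 0"
    by (simp add: MAD_def)
  then have "\<forall>t. (\<Sum>i\<in>UNIV. (r $ t $ i - mean_ret r $ i) * x $ i) = 0"
    by (subst (asm) sum_nonneg_eq_0_iff) auto
  with H x show False by blast
qed

lemma RP_struct:
  fixes r :: "real^'n::finite^'t::finite"
  assumes H: "\<forall>x::real^'n. (\<forall>i. x $ i \<ge> 0) \<and>
             (\<forall>t. (\<Sum>i\<in>UNIV. (r $ t $ i - mean_ret r $ i) * x $ i) = 0) \<longrightarrow> x = 0"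
    and rp: "MAD_RP r x"
  shows "\<exists>s c. s \<in> subdifferential (MAD r) x \<and> c > 0 \<and> (\<forall>i. x $ i > 0 \<and> s $ i = c / x $ i)"
proof -
  from rp obtain s c where xs: "x \<in> std_simplex" and s: "s \<in> subdifferential (MAD r) x"
    and c: "\<forall>i. x $ i * s $ i = c" unfolding MAD_RP_def by blast
  have x0: "\<forall>i. x $ i \<ge> 0" and x1: "(\<Sum>i\<in>UNIV. x $ i) = 1" using xs by (auto simp: std_simplex_def)
  have "x \<noteq> 0" using x1 by auto
  with MAD_pos[OF H x0] have pos: "MAD r x > 0" by blast
  have "MAD r x = s \<bullet> x" using s subdiff_char by metis
  also have "\<dots> = (\<Sum>i\<in>UNIV. x $ i * s $ i)" by (simp add: inner_vec_def mult.commute)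
  also have "\<dots> = real CARD('n) * c" using c by simp
  finally have "real CARD('n) * c > 0" using pos by simp
  then have cpos: "c > 0" by (simp add: zero_less_mult_iff)
  have "x $ i > 0 \<and> s $ i = c / x $ i" for i
  proof -
    have "x $ i \<noteq> 0" using c cpos by (metis mult_zero_left less_irrefl)
    then have "x $ i > 0" using x0 by (simp add: order_less_le)
    then show ?thesis using c by (auto simp: field_simps)
  qed
  with s cpos show ?thesis by blast
qed

lemma b_sum:
  fixes b :: "'n::finite \<Rightarrow> real"
  assumes "\<forall>i. b i > 0" "(\<Sum>i\<in>UNIV. b i) \<le> real CARD('n)" "(\<Sum>i\<in>UNIV. 1 / b i) \<le> real CARD('n)"
  shows "b i = 1"
proof -
  have nn: "\<forall>i. b i + 1 / b i - 2 \<ge> 0"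
  proof
    fix i
    have "b i + 1 / b i - 2 = (b i - 1)^2 / b i" using assms(1)[rule_format, of i] by (simp add: field_simps power2_eq_square)
    then show "b i + 1 / b i - 2 \<ge> 0" using assms(1)[rule_format, of i] by simp
  qed
  have "(\<Sum>i\<in>UNIV. b i + 1 / b i - 2) \<le> 0"
    using assms(2,3) by (simp add: sum.distrib sum_subtractf)
  then have "(\<Sum>i\<in>UNIV. b i + 1 / b i - 2) = 0" using nn by (simp add: sum_nonneg order_antisym)
  then have "b i + 1 / b i - 2 = 0" using nn by (subst (asm) sum_nonneg_eq_0_iff) auto
  moreover have "(b i - 1)^2 = b i * (b i + 1 / b i - 2)" using assms(1)[rule_format, of i]
    by (simp add: field_simps power2_eq_square)
  ultimately have "(b i - 1)^2 = 0" by simp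
  then show ?thesis by simp
qed

lemma RP_unique:
  fixes r :: "real^'n::finite^'t::finite"
  assumes H: "\<forall>x::real^'n. (\<forall>i. x $ i \<ge> 0) \<and>
             (\<forall>t. (\<Sum>i\<in>UNIV. (r $ t $ i - mean_ret r $ i) * x $ i) = 0) \<longrightarrow> x = 0"
    and rp: "MAD_RP r x" and rp': "MAD_RP r x'"
  shows "x = x'"
proof -
  obtain s c where s: "s \<in> subdifferential (MAD r) x" and c: "c > 0"
    and xi: "\<forall>i. x $ i > 0 \<and> s $ i = c / x $ i" using RP_struct[OF H rp] by blast
  obtain s' c' where s': "s' \<in> subdifferential (MAD r) x'" and c': "c' > 0"
    and xi': "\<forall>i. x' $ i > 0 \<and> s' $ i = c' / x' $ i" using RP_struct[OF H rp'] by blast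
  have sx: "s \<bullet> x = MAD r x" "\<forall>z. s \<bullet> z \<le> MAD r z" using s subdiff_char by metis+
  have sx': "s' \<bullet> x' = MAD r x'" "\<forall>z. s' \<bullet> z \<le> MAD r z" using s' subdiff_char by metis+
  have p1: "\<forall>i. s $ i * x $ i = c" using xi by (auto simp: less_imp_neq[symmetric])
  have p2: "\<forall>i. s' $ i * x' $ i = c'" using xi' by (auto simp: less_imp_neq[symmetric])
  have e1: "MAD r x = real CARD('n) * c"
    using sx(1) p1 by (simp add: inner_vec_def)
  have e2: "MAD r x' = real CARD('n) * c'"
    using sx'(1) p2 by (simp add: inner_vec_def)
  define b where "b i = (c * x' $ i) / (c' * x $ i)" for i
  have bpos: "\<forall>i. b i > 0" using xi xi' c c' by (simp add: b_def)
  have "(\<Sum>i\<in>UNIV. c * x' $ i / x $ i) \<le> real CARD('n) * c'"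
    using sx(2)[rule_format, of x'] xi e2 by (simp add: inner_vec_def mult.commute)
  then have "(\<Sum>i\<in>UNIV. c * x' $ i / x $ i) / c' \<le> real CARD('n)"
    using c' by (simp add: divide_le_eq mult.commute)
  moreover have "(\<Sum>i\<in>UNIV. b i) = (\<Sum>i\<in>UNIV. c * x' $ i / x $ i) / c'"
    unfolding sum_divide_distrib by (rule sum.cong) (auto simp: b_def)
  ultimately have b1: "(\<Sum>i\<in>UNIV. b i) \<le> real CARD('n)" by simp
  have "(\<Sum>i\<in>UNIV. c' * x $ i / x' $ i) \<le> real CARD('n) * c"
    using sx'(2)[rule_format, of x] xi' e1 by (simp add: inner_vec_def mult.commute)
  then have "(\<Sum>i\<in>UNIV. c' * x $ i / x' $ i) / c \<le> real CARD('n)"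
    using c by (simp add: divide_le_eq mult.commute)
  moreover have "(\<Sum>i\<in>UNIV. 1 / b i) = (\<Sum>i\<in>UNIV. c' * x $ i / x' $ i) / c"
    unfolding sum_divide_distrib by (rule sum.cong) (auto simp: b_def)
  ultimately have b2: "(\<Sum>i\<in>UNIV. 1 / b i) \<le> real CARD('n)" by simp
  have "b i = 1" for i using b_sum[OF bpos b1 b2] .
  then have xx: "x' $ i = (c' / c) * x $ i" for i
    using c c' xi by (simp add: b_def field_simps)
  have "(\<Sum>i\<in>UNIV. x $ i) = 1" "(\<Sum>i\<in>UNIV. x' $ i) = 1"
    using rp rp' by (auto simp: MAD_RP_def std_simplex_def)
  then have "c' / c = 1" using xx
    by (metis (no_types, lifting) mult.right_neutral sum.cong sum_distrib_left)
  then show ?thesis using xx by (simp add: vec_eq_iff)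
qed

lemma compact_simplex: "compact (std_simplex :: (real^'n::finite) set)"
proof -
  have cl: "closed {x::real^'n. (\<forall>i. x $ i \<ge> 0) \<and> (\<Sum>i\<in>UNIV. x $ i) = 1}"
    by (intro closed_Collect_conj closed_Collect_all closed_Collect_le closed_Collect_eq continuous_intros)
  have "std_simplex \<subseteq> cbox (0::real^'n) (\<chi> i. 1)"
  proof
    fix x :: "real^'n" assume x: "x \<in> std_simplex"
    have "x $ i \<le> 1" for i
    proof -
      have "x $ i \<le> (\<Sum>j\<in>UNIV. x $ j)" using x by (intro member_le_sum) (auto simp: std_simplex_def)
      then show ?thesis using x by (simp add: std_simplex_def)
    qed
    then show "x \<in> cbox 0 (\<chi> i. 1)" using x by (auto simp: mem_box_cart std_simplex_def)
  qed
  then have "bounded (std_simplex :: (real^'n) set)" using bounded_cbox bounded_subset by blast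
  with cl show ?thesis by (simp add: compact_eq_bounded_closed std_simplex_def)
qed

lemma lower_bound:
  fixes r :: "real^'n::finite^'t::finite"
  assumes H: "\<forall>x::real^'n. (\<forall>i. x $ i \<ge> 0) \<and>
             (\<forall>t. (\<Sum>i\<in>UNIV. (r $ t $ i - mean_ret r $ i) * x $ i) = 0) \<longrightarrow> x = 0"
  shows "\<exists>m>0. \<forall>y::real^'n. (\<forall>i. y $ i \<ge> 0) \<longrightarrow> m * (\<Sum>i\<in>UNIV. y $ i) \<le> MAD r y"
proof -
  have ne: "(\<chi> i. 1 / real CARD('n)) \<in> (std_simplex :: (real^'n) set)"
    by (simp add: std_simplex_def)
  obtain x0 where x0: "x0 \<in> (std_simplex :: (real^'n) set)" and mn: "\<forall>y\<in>std_simplex. MAD r x0 \<le> MAD r y"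
    using continuous_attains_inf[OF compact_simplex _ MAD_cont] ne by blast
  have "x0 \<noteq> 0" using x0 by (auto simp: std_simplex_def)
  then have m: "MAD r x0 > 0" using MAD_pos[OF H] x0 by (auto simp: std_simplex_def)
  have "MAD r x0 * (\<Sum>i\<in>UNIV. y $ i) \<le> MAD r y" if y: "\<forall>i. y $ i \<ge> 0" for y :: "real^'n"
  proof (cases "(\<Sum>i\<in>UNIV. y $ i) = 0")
    case True then show ?thesis using MAD_nonneg by simp
  next
    case False
    define S where "S = (\<Sum>i\<in>UNIV. y $ i)"
    have "S \<ge> 0" using y by (simp add: S_def sum_nonneg)
    with False have S: "S > 0" by (simp add: S_def)
    have "(1 / S) *\<^sub>R y \<in> std_simplex" using y S
      by (auto simp: std_simplex_def S_def sum_divide_distrib[symmetric])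
    then have "MAD r x0 \<le> MAD r ((1 / S) *\<^sub>R y)" using mn by blast
    also have "\<dots> = MAD r y / S" using S by (simp add: MAD_scale)
    finally show ?thesis using S by (simp add: S_def[symmetric] field_simps)
  qed
  with m show ?thesis by blast
qed

lemma variational:
  fixes r :: "real^'n::finite^'t::finite"
  assumes y: "\<forall>i. y $ i > 0"
    and mn: "\<forall>z. (\<forall>i. z $ i > 0) \<longrightarrow>
               MAD r y - (\<Sum>i\<in>UNIV. ln (y $ i)) \<le> MAD r z - (\<Sum>i\<in>UNIV. ln (z $ i))"
  shows "(\<Sum>i\<in>UNIV. d $ i / y $ i) \<le> MAD r (y + d) - MAD r y"
proof -
  define g where "g t = (\<Sum>i\<in>UNIV. d $ i / (y $ i + t * d $ i))" for t :: real
  have "((\<lambda>t. d $ i / (y $ i + t * d $ i)) \<longlongrightarrow> d $ i / (y $ i + 0 * d $ i)) (at_right 0)" for i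
    using y[rule_format, of i] by (intro tendsto_intros) auto
  then have lim: "(g \<longlongrightarrow> (\<Sum>i\<in>UNIV. d $ i / y $ i)) (at_right 0)"
    unfolding g_def by (auto intro!: tendsto_sum)
  have ev1: "\<forall>\<^sub>F t in at_right 0. \<forall>i. y $ i + t * d $ i > 0"
  proof (rule eventually_all_finite)
    fix i
    have "((\<lambda>t. y $ i + t * d $ i) \<longlongrightarrow> y $ i + 0 * d $ i) (at_right 0)"
      by (intro tendsto_intros)
    then show "\<forall>\<^sub>F t in at_right 0. y $ i + t * d $ i > 0"
      using y[rule_format, of i] by (auto dest: order_tendstoD(1))
  qed
  have ev2: "\<forall>\<^sub>F t in at_right (0::real). t < 1"
    using eventually_at_right_real[of 0 1] by (rule eventually_mono) auto
  have key: "g t \<le> MAD r (y + d) - MAD r y"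
    if t: "0 < t" "t < 1" and w: "\<forall>i. y $ i + t * d $ i > 0" for t
  proof -
    define w where "w = y + t *\<^sub>R d"
    have wi: "w $ i = y $ i + t * d $ i" for i by (simp add: w_def)
    have "MAD r y - (\<Sum>i\<in>UNIV. ln (y $ i)) \<le> MAD r w - (\<Sum>i\<in>UNIV. ln (w $ i))"
      using mn[rule_format, of w] w by (simp add: wi)
    then have A: "(\<Sum>i\<in>UNIV. ln (w $ i) - ln (y $ i)) \<le> MAD r w - MAD r y"
      by (simp add: sum_subtractf)
    have B: "t * d $ i / w $ i \<le> ln (w $ i) - ln (y $ i)" for i
    proof -
      have wp: "w $ i > 0" using w by (simp add: wi)
      have yp: "y $ i > 0" using y by simp
      have "ln (y $ i / w $ i) \<le> y $ i / w $ i - 1" using wp yp by (intro ln_le_minus_one) simp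
      also have "y $ i / w $ i - 1 = - (t * d $ i / w $ i)" using wp by (simp add: field_simps wi)
      finally show ?thesis using wp yp by (simp add: ln_div)
    qed
    have "t * g t = (\<Sum>i\<in>UNIV. t * d $ i / w $ i)" by (simp add: g_def sum_distrib_left wi)
    also have "\<dots> \<le> (\<Sum>i\<in>UNIV. ln (w $ i) - ln (y $ i))" by (intro sum_mono B)
    also have "\<dots> \<le> MAD r w - MAD r y" by (rule A)
    also have "\<dots> \<le> t * (MAD r (y + d) - MAD r y)"
      using MAD_convex[of t r y d] t by (simp add: w_def algebra_simps)
    finally show ?thesis using t by simp
  qed
  have "\<forall>\<^sub>F t in at_right 0. g t \<le> MAD r (y + d) - MAD r y"
    using eventually_conj[OF eventually_conj[OF eventually_at_right_less ev2] ev1]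
    by eventually_elim (use key in auto)
  then show ?thesis
    by (rule tendsto_le[OF trivial_limit_at_right_real tendsto_const lim])
qed

lemma minimizer:
  fixes r :: "real^'n::finite^'t::finite"
  assumes H: "\<forall>x::real^'n. (\<forall>i. x $ i \<ge> 0) \<and>
             (\<forall>t. (\<Sum>i\<in>UNIV. (r $ t $ i - mean_ret r $ i) * x $ i) = 0) \<longrightarrow> x = 0"
  shows "\<exists>y::real^'n. (\<forall>i. y $ i > 0) \<and> (\<forall>z. (\<forall>i. z $ i > 0) \<longrightarrow>
               MAD r y - (\<Sum>i\<in>UNIV. ln (y $ i)) \<le> MAD r z - (\<Sum>i\<in>UNIV. ln (z $ i)))"
proof -
  obtain m where m: "m > 0" and lb: "\<forall>y::real^'n. (\<forall>i. y $ i \<ge> 0) \<longrightarrow> m * (\<Sum>i\<in>UNIV. y $ i) \<le> MAD r y"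
    using lower_bound[OF H] by blast
  define F where "F y = MAD r y - (\<Sum>i\<in>UNIV. ln (y $ i))" for y :: "real^'n"
  define phi where "phi u = m * u - ln u" for u :: real
  define L where "L = 1 + ln m"
  define one where "one = ((\<chi> i. 1) :: real^'n)"
  define C where "C = F one"
  define N where "N = real CARD('n)"
  define E where "E = C - N * L + L"
  define ep where "ep = exp (- (\<bar>E\<bar> + 1))"
  define M where "M = 2 * (\<bar>E\<bar> + \<bar>ln (m / 2)\<bar> + 1) / m"
  have ep: "ep > 0" by (simp add: ep_def)
  have Mp: "M > 0" using m by (simp add: M_def add_pos_nonneg)
  have phiL: "L \<le> phi u" if u: "u > 0" for u
  proof -
    have "ln (m * u) \<le> m * u - 1" using m u by (intro ln_le_minus_one) simp
    then show ?thesis using m u by (simp add: ln_mult phi_def L_def)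
  qed
  have phiS: "E < phi u" if u: "0 < u" "u < ep" for u
  proof -
    have "ln u < ln ep" using u by simp
    then have "ln u < - (\<bar>E\<bar> + 1)" by (simp add: ep_def)
    moreover have "m * u > 0" using m u by simp
    ultimately show ?thesis by (simp add: phi_def)
  qed
  have phiB: "E < phi u" if u: "M < u" for u
  proof -
    have up: "u > 0" using u Mp by simp
    have "ln (m / 2 * u) \<le> m / 2 * u - 1" using m up by (intro ln_le_minus_one) simp
    moreover have "ln (m / 2 * u) = ln (m / 2) + ln u" using m up by (simp add: ln_mult del: times_divide_eq_left)
    ultimately have "ln u \<le> m / 2 * u - 1 - ln (m / 2)" by linarith
    moreover have "m * M / 2 = \<bar>E\<bar> + \<bar>ln (m / 2)\<bar> + 1" using m by (simp add: M_def)
    moreover have "m * M < m * u" using m u by simp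
    ultimately show ?thesis unfolding phi_def by linarith
  qed
  have Fphi: "(\<Sum>i\<in>UNIV. phi (z $ i)) \<le> F z" if z: "\<forall>i. z $ i > 0" for z
  proof -
    have "m * (\<Sum>i\<in>UNIV. z $ i) \<le> MAD r z" using lb z by (simp add: less_imp_le)
    then show ?thesis by (simp add: phi_def F_def sum_subtractf sum_distrib_left)
  qed
  have inK: "\<forall>i. ep \<le> z $ i \<and> z $ i \<le> M" if z: "\<forall>i. z $ i > 0" and Fz: "F z \<le> C" for z
  proof (rule ccontr)
    assume "\<not> (\<forall>i. ep \<le> z $ i \<and> z $ i \<le> M)"
    then obtain j where j: "z $ j < ep \<or> M < z $ j" using not_le by blast
    have Ej: "E < phi (z $ j)" using j phiS phiB z by blast
    have "phi (z $ j) - L \<le> (\<Sum>i\<in>UNIV. phi (z $ i) - L)"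
      by (rule member_le_sum[where f = "\<lambda>i. phi (z $ i) - L"]) (use phiL z in auto)
    also have "\<dots> = (\<Sum>i\<in>UNIV. phi (z $ i)) - N * L" by (simp add: sum_subtractf N_def)
    finally have "C < (\<Sum>i\<in>UNIV. phi (z $ i))" using Ej by (simp add: E_def)
    with Fphi[OF z] Fz show False by simp
  qed
  define K where "K = (cbox (\<chi> i. ep) (\<chi> i. M) :: (real^'n) set)"
  have Kmem: "z \<in> K \<longleftrightarrow> (\<forall>i. ep \<le> z $ i \<and> z $ i \<le> M)" for z by (simp add: K_def mem_box_cart)
  have "one \<in> K" unfolding Kmem by (rule inK) (auto simp: one_def C_def)
  then have Kne: "K \<noteq> {}" by blast
  have cont: "continuous_on K F"
    unfolding F_def
  proof (intro continuous_intros MAD_cont continuous_on_ln continuous_on_component continuous_on_id ballI)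
    fix y i assume "y \<in> K"
    then show "y $ i \<noteq> 0" using ep Kmem by (metis less_le_trans less_irrefl)
  qed
  obtain y where yK: "y \<in> K" and ymin: "\<forall>z\<in>K. F y \<le> F z"
    using continuous_attains_inf[OF _ Kne cont] by (auto simp: K_def)
  have ypos: "\<forall>i. y $ i > 0" using yK ep Kmem by (meson less_le_trans)
  have "F y \<le> F z" if z: "\<forall>i. z $ i > 0" for z
  proof (cases "F z \<le> C")
    case True then show ?thesis using inK[OF z] Kmem ymin by blast
  next
    case False
    have "F y \<le> F one" using ymin \<open>one \<in> K\<close> by blast
    then show ?thesis using False by (simp add: C_def)
  qed
  with ypos show ?thesis unfolding F_def by blast
qed

theorem proposition2:
  fixes r :: "real^'n::finite^'t::finite"
  assumes "\<forall>x::real^'n. (\<forall>i. x $ i \<ge> 0) \<and>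
             (\<forall>t. (\<Sum>i\<in>UNIV. (r $ t $ i - mean_ret r $ i) * x $ i) = 0) \<longrightarrow> x = 0"
  shows "\<exists>!x. MAD_RP r x"
proof -
  obtain y :: "real^'n" where y: "\<forall>i. y $ i > 0" and mn: "\<forall>z. (\<forall>i. z $ i > 0) \<longrightarrow>
               MAD r y - (\<Sum>i\<in>UNIV. ln (y $ i)) \<le> MAD r z - (\<Sum>i\<in>UNIV. ln (z $ i))"
    using minimizer[OF assms] by blast
  define s where "s = ((\<chi> i. 1 / y $ i) :: real^'n)"
  have "s \<in> subdifferential (MAD r) y"
    unfolding subdifferential_def
  proof (intro CollectI allI)
    fix z :: "real^'n"
    have "s \<bullet> (z - y) = (\<Sum>i\<in>UNIV. (z - y) $ i / y $ i)" by (simp add: s_def inner_vec_def)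
    also have "\<dots> \<le> MAD r (y + (z - y)) - MAD r y" by (rule variational[OF y mn])
    finally show "MAD r y + s \<bullet> (z - y) \<le> MAD r z" by simp
  qed
  then have sy: "s \<bullet> y = MAD r y" "\<forall>z. s \<bullet> z \<le> MAD r z" using subdiff_char by metis+
  define S where "S = (\<Sum>i\<in>UNIV. y $ i)"
  have "S > 0" unfolding S_def using y by (simp add: sum_pos)
  define x where "x = (1 / S) *\<^sub>R y"
  have xs: "x \<in> std_simplex" using y \<open>S > 0\<close>
    by (auto simp: x_def std_simplex_def sum_divide_distrib[symmetric] S_def less_imp_le)
  have "s \<bullet> x = MAD r x" using sy(1) \<open>S > 0\<close> by (simp add: x_def MAD_scale)
  then have sx: "s \<in> subdifferential (MAD r) x" using sy(2) subdiff_char by metis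
  have "\<forall>i. x $ i * s $ i = 1 / S" using y by (simp add: x_def s_def less_imp_neq[symmetric])
  with xs sx have "MAD_RP r x" unfolding MAD_RP_def by blast
  then show ?thesis using RP_unique[OF assms] by blast
qed

end
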